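(* Let $\mathcal{H}$ be a complex Hilbert space and $A\in\mathcal{B}(\mathcal{H})$. For a unit vector $x$ put $c(x)=\frac12\langle(|A|+|A^*|)x,x\rangle$ and \[ \xi(x)=\left\langle\left(\big||A|-c(x)I\big|^2+\big||A^*|-c(x)I\big|^2\right)x,x\right\rangle . \] Then \[ \omega^2(A)\le \frac12\left(\left\||A|^2+|A^*|^2\right\|-\inf_{\|x\|=1}\xi(x)\right). \]
   Context: $\mathcal{B}(\mathcal{H})$ denotes the algebra of bounded linear operators on $\mathcal{H}$; for an operator $T$, $|T|=(T^*T)^{1/2}$; $\omega(A)=\sup_{\|x\|=1}|\langle Ax,x\rangle|$ is the numerical radius and $\|\cdot\|$ the operator norm. *)

theory Defs
  imports "HOL-Analysis.Analysis"
begin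

text \<open>Inner product convention: linear in the second argument, conjugate-linear in the first.\<close>

class complex_inner = real_normed_vector +
  fixes cscale :: "complex \<Rightarrow> 'a \<Rightarrow> 'a"  (infixr \<open>*\<^sub>C\<close> 75)
    and cinner :: "'a \<Rightarrow> 'a \<Rightarrow> complex"
  assumes cscale_add_right: "a *\<^sub>C (x + y) = a *\<^sub>C x + a *\<^sub>C y"
    and cscale_add_left: "(a + b) *\<^sub>C x = a *\<^sub>C x + b *\<^sub>C x"
    and cscale_cscale: "a *\<^sub>C (b *\<^sub>C x) = (a * b) *\<^sub>C x"
    and cscale_one: "1 *\<^sub>C x = x"
    and scaleR_cscale: "scaleR r x = complex_of_real r *\<^sub>C x"
    and cinner_commute: "cinner x y = cnj (cinner y x)"
    and cinner_add_left: "cinner (x + y) z = cinner x z + cinner y z"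
    and cinner_cscale_left: "cinner (a *\<^sub>C x) y = cnj a * cinner x y"
    and cinner_ge_zero: "0 \<le> Re (cinner x x)"
    and cinner_eq_zero_iff: "cinner x x = 0 \<longleftrightarrow> x = 0"
    and norm_eq_sqrt_cinner: "norm x = sqrt (Re (cinner x x))"

class chilbert_space = complex_inner + complete_space

definition cbounded_linear :: "('a::complex_inner \<Rightarrow> 'a) \<Rightarrow> bool" where
  "cbounded_linear T \<longleftrightarrow>
     (\<forall>x y. T (x + y) = T x + T y) \<and> (\<forall>c x. T (c *\<^sub>C x) = c *\<^sub>C T x) \<and>
     (\<exists>K. \<forall>x. norm (T x) \<le> norm x * K)"

definition adj :: "('a::complex_inner \<Rightarrow> 'a) \<Rightarrow> ('a \<Rightarrow> 'a)" where
  "adj T = (THE S. \<forall>x y. cinner (T x) y = cinner x (S y))"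

definition cpositive :: "('a::complex_inner \<Rightarrow> 'a) \<Rightarrow> bool" where
  "cpositive P \<longleftrightarrow> cbounded_linear P \<and>
     (\<forall>x. Im (cinner (P x) x) = 0 \<and> 0 \<le> Re (cinner (P x) x))"

definition op_abs :: "('a::complex_inner \<Rightarrow> 'a) \<Rightarrow> ('a \<Rightarrow> 'a)" where
  "op_abs T = (THE P. cpositive P \<and> P \<circ> P = adj T \<circ> T)"

definition numrad :: "('a::complex_inner \<Rightarrow> 'a) \<Rightarrow> real" where
  "numrad A = (SUP x\<in>{x. norm x = 1}. cmod (cinner (A x) x))"

end

theory Submission
  imports Defs
begin

lemma cscale_zero_left[simp]: "0 *\<^sub>C x = 0"
  using cscale_add_left[of 0 0 x] by simp

lemma cscale_zero_right[simp]: "a *\<^sub>C 0 = 0"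
  using cscale_add_right[of a 0 0] by simp

lemma cscale_minus_right: "a *\<^sub>C (- x) = - (a *\<^sub>C x)"
proof -
  have h: "a *\<^sub>C x + a *\<^sub>C (-x) = 0" using cscale_add_right[of a x "-x"] by simp
  show ?thesis using minus_unique[OF h] by simp
qed

lemma cscale_diff_right: "a *\<^sub>C (x - y) = a *\<^sub>C x - a *\<^sub>C y"
  using cscale_add_right[of a x "-y"] by (simp add: cscale_minus_right)

lemma cscale_minus_left: "(- a) *\<^sub>C x = - (a *\<^sub>C x)"
proof -
  have h: "a *\<^sub>C x + (-a) *\<^sub>C x = 0" using cscale_add_left[of a "-a" x] by simp
  show ?thesis using minus_unique[OF h] by simp
qed

lemma cscale_diff_left: "(a - b) *\<^sub>C x = a *\<^sub>C x - b *\<^sub>C x"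
  using cscale_add_left[of a "-b" x] by (simp add: cscale_minus_left)

lemma cscale_real: "complex_of_real r *\<^sub>C x = r *\<^sub>R x"
  by (simp add: scaleR_cscale)

lemma scaleR_cscale_comm: "a *\<^sub>C (r *\<^sub>R x) = r *\<^sub>R (a *\<^sub>C x)"
  by (simp add: scaleR_cscale cscale_cscale mult.commute)

lemma cinner_add_right: "cinner x (y + z) = cinner x y + cinner x z"
  by (metis cinner_commute cinner_add_left complex_cnj_add)

lemma cinner_cscale_right: "cinner x (a *\<^sub>C y) = a * cinner x y"
  by (metis cinner_commute cinner_cscale_left complex_cnj_mult complex_cnj_cnj)

lemma cinner_zero_left[simp]: "cinner 0 y = 0"
  using cinner_add_left[of 0 0 y] by simp

lemma cinner_zero_right[simp]: "cinner x 0 = 0"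
  using cinner_add_right[of x 0 0] by simp

lemma cinner_minus_left: "cinner (- x) y = - cinner x y"
proof -
  have h: "cinner x y + cinner (-x) y = 0" using cinner_add_left[of x "-x" y] by simp
  show ?thesis using minus_unique[OF h] by simp
qed

lemma cinner_minus_right: "cinner x (- y) = - cinner x y"
proof -
  have h: "cinner x y + cinner x (-y) = 0" using cinner_add_right[of x y "-y"] by simp
  show ?thesis using minus_unique[OF h] by simp
qed

lemma cinner_diff_left: "cinner (x - y) z = cinner x z - cinner y z"
  using cinner_add_left[of x "-y" z] by (simp add: cinner_minus_left)

lemma cinner_diff_right: "cinner x (y - z) = cinner x y - cinner x z"
  using cinner_add_right[of x y "-z"] by (simp add: cinner_minus_right)

lemma cinner_scaleR_left: "cinner (r *\<^sub>R x) y = complex_of_real r * cinner x y"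
  by (simp add: scaleR_cscale cinner_cscale_left)

lemma cinner_scaleR_right: "cinner x (r *\<^sub>R y) = complex_of_real r * cinner x y"
  by (simp add: scaleR_cscale cinner_cscale_right)

lemmas cinner_simps = cinner_add_left cinner_add_right cinner_cscale_left cinner_cscale_right
  cinner_minus_left cinner_minus_right cinner_diff_left cinner_diff_right
  cinner_scaleR_left cinner_scaleR_right

lemma cinner_self_Im: "Im (cinner x x) = 0"
proof -
  have "Im (cinner x x) = Im (cnj (cinner x x))" by (metis cinner_commute)
  then show ?thesis by simp
qed

lemma cinner_self_real: "cinner x x = complex_of_real ((norm x)\<^sup>2)"
  using cinner_self_Im[of x] cinner_ge_zero[of x] norm_eq_sqrt_cinner[of x]
  by (simp add: complex_eq_iff)

lemma norm_sq_cinner: "(norm x)\<^sup>2 = Re (cinner x x)"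
  using cinner_self_real[of x] by simp

lemma cinner_eq_all: "(\<And>z. cinner z a = cinner z b) \<Longrightarrow> a = b"
  by (metis cinner_diff_right cinner_eq_zero_iff right_minus_eq)

lemma norm_cscale: "norm (a *\<^sub>C x) = cmod a * norm x"
proof -
  have "cinner (a *\<^sub>C x) (a *\<^sub>C x) = (a * cnj a) * cinner x x"
    by (simp add: cinner_cscale_left cinner_cscale_right mult.assoc mult.commute mult.left_commute)
  also have "\<dots> = complex_of_real ((cmod a * norm x)\<^sup>2)"
    by (simp add: cinner_self_real complex_norm_square[symmetric] power_mult_distrib)
  finally have "(norm (a *\<^sub>C x))\<^sup>2 = (cmod a * norm x)\<^sup>2" by (simp add: norm_sq_cinner)
  then show ?thesis by (rule power2_eq_imp_eq) auto
qed

definition clin :: "('a::complex_inner \<Rightarrow> 'a) \<Rightarrow> bool" where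
  "clin T \<longleftrightarrow> (\<forall>x y. T (x + y) = T x + T y) \<and> (\<forall>c x. T (c *\<^sub>C x) = c *\<^sub>C T x)"

definition bnd :: "('a::complex_inner \<Rightarrow> 'a) \<Rightarrow> real \<Rightarrow> bool" where
  "bnd T K \<longleftrightarrow> (\<forall>x. norm (T x) \<le> K * norm x)"

definition sadj :: "('a::complex_inner \<Rightarrow> 'a) \<Rightarrow> bool" where
  "sadj T \<longleftrightarrow> (\<forall>x y. cinner (T x) y = cinner x (T y))"

lemma clin_add: "clin T \<Longrightarrow> T (x + y) = T x + T y" by (simp add: clin_def)
lemma clin_cscale: "clin T \<Longrightarrow> T (c *\<^sub>C x) = c *\<^sub>C T x" by (simp add: clin_def)
lemma clin_zero: "clin T \<Longrightarrow> T 0 = 0"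
  using clin_cscale[of T 0 0] by simp
lemma clin_minus: "clin T \<Longrightarrow> T (- x) = - T x"
  using clin_cscale[of T "-1" x] by (simp add: cscale_minus_left cscale_one)
lemma clin_diff: "clin T \<Longrightarrow> T (x - y) = T x - T y"
  using clin_add[of T x "-y"] clin_minus[of T y] by simp
lemma clin_scaleR: "clin T \<Longrightarrow> T (r *\<^sub>R x) = r *\<^sub>R T x"
  by (simp add: scaleR_cscale clin_cscale)

lemmas clin_simps = clin_add clin_cscale clin_zero clin_minus clin_diff clin_scaleR

lemma bndD: "bnd T K \<Longrightarrow> norm (T x) \<le> K * norm x" by (simp add: bnd_def)

lemma cbl_clin: "cbounded_linear T \<Longrightarrow> clin T"
  by (simp add: cbounded_linear_def clin_def)

lemma cbl_bnd: fixes T :: "'a::complex_inner \<Rightarrow> 'a" assumes "cbounded_linear T" shows "\<exists>K>0. bnd T K"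
proof -
  obtain K where K: "\<And>x. norm (T x) \<le> norm x * K" using assms by (auto simp: cbounded_linear_def)
  have "bnd T (\<bar>K\<bar> + 1)" unfolding bnd_def
  proof
    fix x :: 'a
    have "norm x * K \<le> norm x * (\<bar>K\<bar> + 1)" by (rule mult_left_mono) auto
    then have "norm x * K \<le> (\<bar>K\<bar> + 1) * norm x" by (simp add: mult.commute)
    then show "norm (T x) \<le> (\<bar>K\<bar> + 1) * norm x" using K[of x] by linarith
  qed
  then show ?thesis by (intro exI[of _ "\<bar>K\<bar> + 1"]) auto
qed

lemma clin_bnd_cbl: "clin T \<Longrightarrow> bnd T K \<Longrightarrow> cbounded_linear T"
  unfolding cbounded_linear_def clin_def bnd_def by (metis mult.commute)

lemma bnd_mono: "bnd T K \<Longrightarrow> K \<le> L \<Longrightarrow> bnd T L"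
  unfolding bnd_def by (meson mult_right_mono norm_ge_zero order_trans)

lemma bnd_comp: "bnd T K \<Longrightarrow> bnd U L \<Longrightarrow> 0 \<le> K \<Longrightarrow> bnd (\<lambda>x. T (U x)) (K * L)"
  unfolding bnd_def by (metis (no_types, opaque_lifting) mult.assoc mult_left_mono order_trans)

lemma sadjD: "sadj T \<Longrightarrow> cinner (T x) y = cinner x (T y)" by (simp add: sadj_def)

lemma sadj_real: assumes "sadj T" shows "Im (cinner (T x) x) = 0"
proof -
  have "cinner (T x) x = cnj (cinner (T x) x)"
    using sadjD[OF assms, of x x] cinner_commute[of x "T x"] by simp
  then have "Im (cinner (T x) x) = Im (cnj (cinner (T x) x))" by simp
  then show ?thesis by simp
qed

lemma polarization_sadj:
  assumes T: "clin T" and re: "\<And>x. Im (cinner (T x) x) = 0"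
  shows "sadj T"
proof -
  have e: "cinner (T x) x = cinner x (T x)" for x
  proof -
    have "cinner x (T x) = cnj (cinner (T x) x)" by (rule cinner_commute)
    also have "\<dots> = cinner (T x) x" using re[of x] by (simp add: complex_eq_iff)
    finally show ?thesis by simp
  qed
  show ?thesis unfolding sadj_def
  proof (intro allI)
    fix x y
    have h1: "cinner (T (x + y)) (x + y) = cinner (x + y) (T (x + y))" by (rule e)
    have h2: "cinner (T (x + \<i> *\<^sub>C y)) (x + \<i> *\<^sub>C y) = cinner (x + \<i> *\<^sub>C y) (T (x + \<i> *\<^sub>C y))" by (rule e)
    have h1': "cinner (T x) y + cinner (T y) x = cinner x (T y) + cinner y (T x)"
      using h1 e[of x] e[of y] by (simp add: clin_simps[OF T] cinner_simps algebra_simps)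
    have h2': "\<i> * (cinner y (T x) + cinner (T x) y) = \<i> * (cinner x (T y) + cinner (T y) x)"
      using h2 e[of x] e[of y] by (simp add: clin_simps[OF T] cinner_simps algebra_simps)
    then have h2'': "cinner y (T x) + cinner (T x) y = cinner x (T y) + cinner (T y) x"
      by simp
    from h1' h2'' show "cinner (T x) y = cinner x (T y)"
      by algebra
  qed
qed

lemma discr_lemma:
  fixes a b c :: real
  assumes "\<And>t. 0 \<le> a - 2 * t * b + t\<^sup>2 * b * c" and "0 \<le> b" and "0 \<le> c"
  shows "b \<le> a * c"
proof (cases "c = 0")
  case True
  have a0: "0 \<le> a" using assms(1)[of 0] by simp
  show ?thesis
  proof (rule ccontr)
    assume "\<not> b \<le> a * c"
    then have "b > 0" using True by simp
    then show False using assms(1)[of "(a + 1) / (2 * b)"] True by (simp add: field_simps)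
  qed
next
  case False
  then have c: "c > 0" using assms(3) by simp
  have "0 \<le> a - 2 * (1/c) * b + (1/c)\<^sup>2 * b * c" by (rule assms(1))
  also have "\<dots> = a - b / c" using c by (simp add: field_simps power2_eq_square)
  finally show ?thesis using c by (simp add: field_simps)
qed

lemma gen_CS:
  assumes T: "clin T" and sa: "sadj T" and pos: "\<And>x. 0 \<le> Re (cinner (T x) x)"
  shows "(cmod (cinner (T x) y))\<^sup>2 \<le> Re (cinner (T x) x) * Re (cinner (T y) y)"
proof -
  define b where "b = cinner (T x) y"
  have byx: "cinner (T y) x = cnj b"
    unfolding b_def using sadjD[OF sa, of y x] cinner_commute[of y "T x"] by simp
  have rx: "cinner (T x) x = complex_of_real (Re (cinner (T x) x))"
    using sadj_real[OF sa, of x] by (simp add: complex_eq_iff)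
  have ry: "cinner (T y) y = complex_of_real (Re (cinner (T y) y))"
    using sadj_real[OF sa, of y] by (simp add: complex_eq_iff)
  have key: "0 \<le> Re (cinner (T x) x) - 2 * t * (cmod b)\<^sup>2 + t\<^sup>2 * (cmod b)\<^sup>2 * Re (cinner (T y) y)" for t :: real
  proof -
    define s where "s = complex_of_real t * cnj b"
    have bcb: "b * cnj b = complex_of_real ((cmod b)\<^sup>2)" by (rule complex_norm_square[symmetric])
    have "cinner (T (x - s *\<^sub>C y)) (x - s *\<^sub>C y) =
        cinner (T x) x - s * b - cnj s * cnj b + cnj s * s * cinner (T y) y"
      by (simp add: clin_simps[OF T] cinner_simps b_def[symmetric] byx algebra_simps)
    also have "s * b = complex_of_real (t * (cmod b)\<^sup>2)"
      by (simp add: s_def bcb mult_ac del: of_real_power)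
    also have "cnj s * cnj b = complex_of_real (t * (cmod b)\<^sup>2)"
      by (simp add: s_def bcb mult_ac del: of_real_power)
    also have "cnj s * s = complex_of_real (t\<^sup>2 * (cmod b)\<^sup>2)"
    proof -
      have "cnj s * s = complex_of_real t * complex_of_real t * (b * cnj b)" by (simp add: s_def mult_ac)
      then show ?thesis by (simp add: bcb power2_eq_square del: of_real_power)
    qed
    finally have "Re (cinner (T (x - s *\<^sub>C y)) (x - s *\<^sub>C y)) =
        Re (cinner (T x) x) - 2 * t * (cmod b)\<^sup>2 + t\<^sup>2 * (cmod b)\<^sup>2 * Re (cinner (T y) y)"
      apply (subst (asm) ry)
      by (simp del: of_real_power)
    then show ?thesis using pos[of "x - s *\<^sub>C y"] by simp
  qed
  show ?thesis
    using discr_lemma[OF key] pos[of x] pos[of y] unfolding b_def by simp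
qed

lemma id_clin: "clin (\<lambda>x. x)" by (simp add: clin_def)

lemma CS: "cmod (cinner x y) \<le> norm x * norm y"
proof -
  have "(cmod (cinner x y))\<^sup>2 \<le> Re (cinner x x) * Re (cinner y y)"
    using gen_CS[OF id_clin, of x y] by (simp add: sadj_def cinner_ge_zero)
  also have "\<dots> = (norm x * norm y)\<^sup>2" by (simp add: norm_sq_cinner power_mult_distrib)
  finally show ?thesis by (rule power2_le_imp_le) simp
qed

lemma Re_cinner_le: "Re (cinner x y) \<le> norm x * norm y"
  using CS[of x y] complex_Re_le_cmod[of "cinner x y"] by linarith

lemma lim_bound:
  fixes f :: "nat \<Rightarrow> 'a::real_normed_vector" and g :: "nat \<Rightarrow> 'b::real_normed_vector"
  assumes "f \<longlonglongrightarrow> l" "\<And>n. norm (g n - g0) \<le> C * norm (f n - l)"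
  shows "g \<longlonglongrightarrow> g0"
proof -
  have "(\<lambda>n. norm (f n - l)) \<longlonglongrightarrow> 0"
    using LIM_zero[OF assms(1)] tendsto_norm_zero by blast
  then have "(\<lambda>n. C * norm (f n - l)) \<longlonglongrightarrow> 0"
    using tendsto_mult_right_zero by blast
  then have "(\<lambda>n. g n - g0) \<longlonglongrightarrow> 0"
    by (rule Lim_null_comparison[rotated]) (use assms(2) in auto)
  then show ?thesis by (rule LIM_zero_cancel)
qed

lemma tendsto_cinner_left:
  assumes "f \<longlonglongrightarrow> l" shows "(\<lambda>n. cinner (f n) y) \<longlonglongrightarrow> cinner l y"
proof (rule lim_bound[OF assms, where C = "norm y"])
  fix n show "norm (cinner (f n) y - cinner l y) \<le> norm y * norm (f n - l)"
    using CS[of "f n - l" y] by (simp add: cinner_diff_left mult.commute)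
qed

lemma tendsto_cinner_right:
  assumes "f \<longlonglongrightarrow> l" shows "(\<lambda>n. cinner y (f n)) \<longlonglongrightarrow> cinner y l"
proof (rule lim_bound[OF assms, where C = "norm y"])
  fix n show "norm (cinner y (f n) - cinner y l) \<le> norm y * norm (f n - l)"
    using CS[of y "f n - l"] by (simp add: cinner_diff_right)
qed

lemma tendsto_op:
  assumes "clin T" "bnd T K" "f \<longlonglongrightarrow> l" shows "(\<lambda>n. T (f n)) \<longlonglongrightarrow> T l"
proof (rule lim_bound[OF assms(3), where C = K])
  fix n show "norm (T (f n) - T l) \<le> K * norm (f n - l)"
    using bndD[OF assms(2), of "f n - l"] clin_diff[OF assms(1)] by simp
qed

lemma tendsto_cscale:
  assumes "f \<longlonglongrightarrow> l" shows "(\<lambda>n. c *\<^sub>C f n) \<longlonglongrightarrow> c *\<^sub>C l"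
  by (rule lim_bound[OF assms, where C = "cmod c"]) (simp add: norm_cscale cscale_diff_right[symmetric])

lemma parallelogram:
  fixes a b :: "'a::complex_inner"
  shows   "(norm (a - b))\<^sup>2 + (norm (a + b))\<^sup>2 = 2 * (norm a)\<^sup>2 + 2 * (norm b)\<^sup>2"
  unfolding norm_sq_cinner by (simp add: cinner_simps)

definition csubspace :: "'a::complex_inner set \<Rightarrow> bool" where
  "csubspace M \<longleftrightarrow> 0 \<in> M \<and> (\<forall>u\<in>M. \<forall>v\<in>M. u + v \<in> M) \<and> (\<forall>c. \<forall>u\<in>M. c *\<^sub>C u \<in> M)"

lemma projection:
  fixes M :: "'a::chilbert_space set"
  assumes cl: "closed M" and sub: "csubspace M"
  shows "\<exists>m\<in>M. \<forall>u\<in>M. cinner u (x - m) = 0"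
proof -
  have M0: "0 \<in> M" and Madd: "\<And>u v. u \<in> M \<Longrightarrow> v \<in> M \<Longrightarrow> u + v \<in> M"
    and Msc: "\<And>c u. u \<in> M \<Longrightarrow> c *\<^sub>C u \<in> M" using sub by (auto simp: csubspace_def)
  define S where "S = (\<lambda>u. (norm (x - u))\<^sup>2) ` M"
  define D where "D = Inf S"
  have Sne: "S \<noteq> {}" using M0 by (auto simp: S_def)
  have Sbdd: "bdd_below S" unfolding S_def by (rule bdd_belowI[of _ 0]) auto
  have Dle: "D \<le> (norm (x - u))\<^sup>2" if "u \<in> M" for u
    unfolding D_def using that Sbdd by (auto simp: S_def intro!: cInf_lower)
  have "\<exists>u\<in>M. (norm (x - u))\<^sup>2 < D + 1 / (real n + 1)" for n
  proof -
    have "Inf S < D + 1 / (real n + 1)" unfolding D_def by (simp add: add_pos_pos)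
    then show ?thesis using cInf_less_iff[OF Sne Sbdd] by (auto simp: S_def)
  qed
  then obtain u where uM: "\<And>n. u n \<in> M" and ub: "\<And>n. (norm (x - u n))\<^sup>2 < D + 1 / (real n + 1)"
    by metis
  have cb: "(norm (u n - u k))\<^sup>2 \<le> 2 / (real n + 1) + 2 / (real k + 1)" for n k
  proof -
    define mid where "mid = (1/2) *\<^sub>R (u n + u k)"
    have "mid \<in> M" unfolding mid_def scaleR_cscale by (intro Msc Madd uM)
    then have "D \<le> (norm (x - mid))\<^sup>2" by (rule Dle)
    have "(x - u n) + (x - u k) = 2 *\<^sub>R (x - mid)" unfolding mid_def by (simp add: algebra_simps scaleR_2)
    then have "(norm ((x - u n) + (x - u k)))\<^sup>2 = 4 * (norm (x - mid))\<^sup>2"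
      by (simp add: power_mult_distrib)
    moreover have "(x - u n) - (x - u k) = u k - u n" by simp
    ultimately have "(norm (u k - u n))\<^sup>2 + 4 * (norm (x - mid))\<^sup>2 = 2 * (norm (x - u n))\<^sup>2 + 2 * (norm (x - u k))\<^sup>2"
      using parallelogram[of "x - u n" "x - u k"] by simp
    then show ?thesis using ub[of n] ub[of k] \<open>D \<le> _\<close> by (simp add: norm_minus_commute)
  qed
  have "Cauchy u"
  proof (rule CauchyI)
    fix e :: real assume e: "0 < e"
    obtain N :: nat where N: "4 / e\<^sup>2 < real N" using reals_Archimedean2 by blast
    have "\<forall>m\<ge>N. \<forall>n\<ge>N. norm (u m - u n) < e"
    proof (intro allI impI)
      fix m n assume mn: "N \<le> m" "N \<le> n"
      have "4 / e\<^sup>2 < real N + 1" using N by simp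
      then have "4 / (real N + 1) < e\<^sup>2" using e by (simp add: field_simps)
      have "2 / (real m + 1) \<le> 2 / (real N + 1)" using mn by (simp add: frac_le)
      moreover have "2 / (real n + 1) \<le> 2 / (real N + 1)" using mn by (simp add: frac_le)
      ultimately have "(norm (u m - u n))\<^sup>2 < e\<^sup>2"
        using cb[of m n] \<open>4 / (real N + 1) < e\<^sup>2\<close> by simp
      then show "norm (u m - u n) < e" using e by (simp add: power_less_imp_less_base)
    qed
    then show "\<exists>M. \<forall>m\<ge>M. \<forall>n\<ge>M. norm (u m - u n) < e" by blast
  qed
  then have "u \<longlonglongrightarrow> lim u" using Cauchy_convergent convergent_LIMSEQ_iff by blast
  define m where "m = lim u"
  have um: "u \<longlonglongrightarrow> m" unfolding m_def by fact
  have mM: "m \<in> M" using closed_sequentially[OF cl uM um] .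
  have "(\<lambda>n. (norm (x - u n))\<^sup>2) \<longlonglongrightarrow> (norm (x - m))\<^sup>2"
    by (intro tendsto_intros um)
  moreover have "(\<lambda>n. D + 1 / (real n + 1)) \<longlonglongrightarrow> D + 0"
    using LIMSEQ_inverse_real_of_nat_add[of D] by (simp add: inverse_eq_divide add.commute)
  ultimately have "(norm (x - m))\<^sup>2 \<le> D + 0"
    by (rule LIMSEQ_le) (use ub less_imp_le in blast)
  then have mmin: "(norm (x - m))\<^sup>2 \<le> (norm (x - v))\<^sup>2" if "v \<in> M" for v
    using Dle[OF that] \<open>(norm (x - m))\<^sup>2 \<le> D + 0\<close> by linarith
  show ?thesis
  proof (intro bexI[OF _ mM] ballI)
    fix v assume vM: "v \<in> M"
    define z where "z = x - m"
    define w where "w = cinner v z"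
    define r where "r = 1 / ((norm v)\<^sup>2 + 1)"
    have np: "0 < (norm v)\<^sup>2 + 1" by (simp add: add_nonneg_pos)
    have r: "0 < r" "r * (norm v)\<^sup>2 < 1" unfolding r_def using np by (auto simp: field_simps)
    define t where "t = complex_of_real r * w"
    have "m + t *\<^sub>C v \<in> M" by (intro Madd mM Msc vM)
    from mmin[OF this] have "(norm z)\<^sup>2 \<le> (norm (z - t *\<^sub>C v))\<^sup>2"
      by (simp add: z_def algebra_simps)
    also have "(norm (z - t *\<^sub>C v))\<^sup>2 = (norm z)\<^sup>2 - 2 * r * (cmod w)\<^sup>2 + r\<^sup>2 * (cmod w)\<^sup>2 * (norm v)\<^sup>2"
    proof -
      have zv: "cinner z v = cnj w" unfolding w_def by (rule cinner_commute)
      have wcw: "w * cnj w = complex_of_real ((cmod w)\<^sup>2)" by (rule complex_norm_square[symmetric])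
      have "cinner (z - t *\<^sub>C v) (z - t *\<^sub>C v) = cinner z z - t * cnj w - cnj t * w + cnj t * t * cinner v v"
        by (simp add: cinner_simps zv w_def[symmetric] algebra_simps)
      also have "t * cnj w = complex_of_real (r * (cmod w)\<^sup>2)"
        by (simp add: t_def wcw mult_ac del: of_real_power)
      also have "cnj t * w = complex_of_real (r * (cmod w)\<^sup>2)"
        by (simp add: t_def wcw mult_ac del: of_real_power)
      also have "cnj t * t = complex_of_real (r\<^sup>2 * (cmod w)\<^sup>2)"
      proof -
        have "cnj t * t = complex_of_real r * complex_of_real r * (w * cnj w)" by (simp add: t_def mult_ac)
        then show ?thesis by (simp add: wcw power2_eq_square del: of_real_power)
      qed
      finally have h: "cinner (z - t *\<^sub>C v) (z - t *\<^sub>C v) = cinner z z - complex_of_real (r * (cmod w)\<^sup>2) -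
         complex_of_real (r * (cmod w)\<^sup>2) + complex_of_real (r\<^sup>2 * (cmod w)\<^sup>2) * cinner v v" .
      show ?thesis using arg_cong[OF h, of Re] unfolding norm_sq_cinner
        by (simp add: cinner_self_real del: of_real_power)
    qed
    finally have "0 \<le> (cmod w)\<^sup>2 * r * (r * (norm v)\<^sup>2 - 2)"
      by (simp add: algebra_simps power2_eq_square)
    moreover have "r * (r * (norm v)\<^sup>2 - 2) < 0" using r by (simp add: mult_pos_neg)
    ultimately have "(cmod w)\<^sup>2 \<le> 0"
      by (smt (verit) mult.assoc mult_nonneg_nonpos zero_le_power2 mult_le_0_iff)
    then show "cinner v (x - m) = 0" unfolding w_def z_def by simp
  qed
qed

lemma riesz:
  fixes f :: "'a::chilbert_space \<Rightarrow> complex"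
  assumes add: "\<And>x y. f (x + y) = f x + f y" and sc: "\<And>c x. f (c *\<^sub>C x) = c * f x"
    and bd: "\<And>x. cmod (f x) \<le> K * norm x"
  shows "\<exists>v. \<forall>x. f x = cinner v x"
proof (cases "\<forall>x. f x = 0")
  case True then show ?thesis by (intro exI[of _ 0]) simp
next
  case False
  then obtain x0 where x0: "f x0 \<noteq> 0" by blast
  have f0: "f 0 = 0" using sc[of 0 0] by simp
  have fdiff: "f (x - y) = f x - f y" for x y
    using add[of "x - y" y] by simp
  define M where "M = {x. f x = 0}"
  have sub: "csubspace M" unfolding csubspace_def M_def using f0 add sc by auto
  have cl: "closed M" unfolding closed_sequential_limits
  proof (intro allI impI)
    fix s l assume h: "(\<forall>n. s n \<in> M) \<and> s \<longlonglongrightarrow> l"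
    have "(\<lambda>n. f (s n)) \<longlonglongrightarrow> f l"
    proof (rule lim_bound[where C = K])
      show "s \<longlonglongrightarrow> l" using h by simp
      fix n show "norm (f (s n) - f l) \<le> K * norm (s n - l)"
        using bd[of "s n - l"] fdiff[of "s n" l] by simp
    qed
    moreover have "(\<lambda>n. f (s n)) = (\<lambda>n. 0)" using h by (auto simp: M_def)
    ultimately have "f l = 0" using LIMSEQ_unique tendsto_const by metis
    then show "l \<in> M" by (simp add: M_def)
  qed
  obtain m where mM: "m \<in> M" and orth: "\<And>u. u \<in> M \<Longrightarrow> cinner u (x0 - m) = 0"
    using projection[OF cl sub, of x0] by blast
  define z where "z = x0 - m"
  have fz: "f z = f x0" using mM by (simp add: z_def fdiff M_def)
  have zz: "cinner z z \<noteq> 0" using fz x0 cinner_eq_zero_iff[of z] f0 by auto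
  have orth': "cinner z u = 0" if "u \<in> M" for u
    using orth[OF that] cinner_commute[of z u] by (simp add: z_def)
  define v where "v = cnj (f z / cinner z z) *\<^sub>C z"
  show ?thesis
  proof (intro exI allI)
    fix x
    have "f x *\<^sub>C z - f z *\<^sub>C x \<in> M"
      by (simp add: M_def fdiff sc mult.commute)
    then have "cinner z (f x *\<^sub>C z - f z *\<^sub>C x) = 0" by (rule orth')
    then have "f x * cinner z z = f z * cinner z x" by (simp add: cinner_simps)
    then show "f x = cinner v x" using zz
      by (simp add: v_def cinner_simps field_simps)
  qed
qed

lemma adj_eq:
  assumes "\<And>x y. cinner (T x) y = cinner x (S y)" shows "adj T = S"
  unfolding adj_def
proof (rule the_equality)
  show "\<forall>x y. cinner (T x) y = cinner x (S y)" using assms by blast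
next
  fix S' assume h: "\<forall>x y. cinner (T x) y = cinner x (S' y)"
  show "S' = S"
  proof
    fix y show "S' y = S y"
      by (rule cinner_eq_all) (metis h assms)
  qed
qed

lemma adj_exists:
  fixes T :: "'a::chilbert_space \<Rightarrow> 'a"
  assumes T: "clin T" "bnd T K"
  shows "\<exists>S. \<forall>x y. cinner (T x) y = cinner x (S y)"
proof -
  have "\<exists>v. \<forall>x. cinner y (T x) = cinner v x" for y
  proof (rule riesz[where K = "norm y * K"])
    fix x show "cmod (cinner y (T x)) \<le> norm y * K * norm x"
      using CS[of y "T x"] bndD[OF T(2), of x]
      by (smt (verit, ccfv_threshold) mult.assoc mult_left_mono norm_ge_zero)
  qed (simp_all add: clin_simps[OF T(1)] cinner_simps)
  then obtain S where S: "\<And>y x. cinner y (T x) = cinner (S y) x" by metis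
  have "cinner (T x) y = cinner x (S y)" for x y
    using S[of y x] cinner_commute[of "T x" y] cinner_commute[of "S y" x] by simp
  then show ?thesis by blast
qed

lemma adj_prop:
  fixes T :: "'a::chilbert_space \<Rightarrow> 'a"
  assumes "cbounded_linear T" shows "cinner (T x) y = cinner x (adj T y)"
proof -
  obtain K where "bnd T K" using cbl_bnd[OF assms] by blast
  then obtain S where S: "\<And>x y. cinner (T x) y = cinner x (S y)"
    using adj_exists cbl_clin[OF assms] by blast
  show ?thesis using adj_eq[of T S, OF S] S by simp
qed

lemma adj_prop':
  fixes T :: "'a::chilbert_space \<Rightarrow> 'a"
  assumes "cbounded_linear T" shows "cinner (adj T x) y = cinner x (T y)"
  by (metis adj_prop assms cinner_commute)

lemma adj_clin:
  fixes T :: "'a::chilbert_space \<Rightarrow> 'a"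
  assumes "cbounded_linear T" shows "clin (adj T)"
  unfolding clin_def
proof (intro conjI allI)
  fix x y show "adj T (x + y) = adj T x + adj T y"
    by (rule cinner_eq_all) (simp add: adj_prop[OF assms, symmetric] cinner_simps)
next
  fix c x show "adj T (c *\<^sub>C x) = c *\<^sub>C adj T x"
    by (rule cinner_eq_all) (simp add: adj_prop[OF assms, symmetric] cinner_simps)
qed

lemma adj_bnd:
  fixes T :: "'a::chilbert_space \<Rightarrow> 'a"
  assumes "cbounded_linear T" "bnd T K" "0 \<le> K" shows "bnd (adj T) K"
  unfolding bnd_def
proof
  fix y
  have "(norm (adj T y))\<^sup>2 = Re (cinner (T (adj T y)) y)"
    by (simp add: norm_sq_cinner adj_prop[OF assms(1)])
  also have "\<dots> \<le> norm (T (adj T y)) * norm y" by (rule Re_cinner_le)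
  also have "\<dots> \<le> K * norm (adj T y) * norm y"
    by (rule mult_right_mono) (auto intro: bndD[OF assms(2)])
  finally have "norm (adj T y) * norm (adj T y) \<le> norm (adj T y) * (K * norm y)"
    by (simp add: power2_eq_square mult_ac)
  then show "norm (adj T y) \<le> K * norm y"
    using assms(3) by (cases "norm (adj T y) = 0") (auto simp: mult_le_cancel_left)
qed

lemma adj_cbl:
  fixes T :: "'a::chilbert_space \<Rightarrow> 'a"
  assumes "cbounded_linear T" shows "cbounded_linear (adj T)"
proof -
  obtain K where "K > 0" "bnd T K" using cbl_bnd[OF assms] by blast
  then show ?thesis using clin_bnd_cbl adj_clin adj_bnd assms by (metis less_imp_le)
qed

lemma adj_adj:
  fixes T :: "'a::chilbert_space \<Rightarrow> 'a"
  assumes "cbounded_linear T" shows "adj (adj T) = T"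
  by (rule adj_eq) (simp add: adj_prop'[OF assms])

lemma adj_sadj: "sadj T \<Longrightarrow> adj T = T"
  by (rule adj_eq) (simp add: sadjD)

definition Sop :: "('a::complex_inner \<Rightarrow> 'a) \<Rightarrow> real \<Rightarrow> 'a \<Rightarrow> 'a" where
  "Sop T k = (\<lambda>x. x - (1 / k) *\<^sub>R T x)"

fun Xs :: "('a::complex_inner \<Rightarrow> 'a) \<Rightarrow> real \<Rightarrow> nat \<Rightarrow> 'a \<Rightarrow> 'a" where
  "Xs T k 0 = (\<lambda>x. 0)"
| "Xs T k (Suc n) = (\<lambda>x. (1/2) *\<^sub>R (Sop T k x + Xs T k n (Xs T k n x)))"

fun xs :: "nat \<Rightarrow> real" where
  "xs 0 = 0"
| "xs (Suc n) = (1 + (xs n)\<^sup>2) / 2"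

definition Xlim :: "('a::complex_inner \<Rightarrow> 'a) \<Rightarrow> real \<Rightarrow> 'a \<Rightarrow> 'a" where
  "Xlim T k = (\<lambda>x. lim (\<lambda>n. Xs T k n x))"

definition csq :: "('a::complex_inner \<Rightarrow> 'a) \<Rightarrow> real \<Rightarrow> 'a \<Rightarrow> 'a" where
  "csq T k = (\<lambda>x. sqrt k *\<^sub>R (x - Xlim T k x))"

lemma xs_bounds: "0 \<le> xs n \<and> xs n \<le> 1"
proof (induction n)
  case (Suc n)
  then have "(xs n)\<^sup>2 \<le> 1" by (simp add: power_le_one)
  then show ?case by simp
qed simp

lemma xs_mono: "xs n \<le> xs (Suc n)"
proof -
  have "0 \<le> (1 - xs n)\<^sup>2" by simp
  then show ?thesis by (simp add: power2_eq_square algebra_simps)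
qed

lemma xs_incseq: "incseq xs"
  by (rule incseq_SucI) (rule xs_mono)

lemma xs_Cauchy: "Cauchy xs"
proof -
  obtain L where "xs \<longlonglongrightarrow> L" using incseq_convergent[OF xs_incseq, of 1] xs_bounds by blast
  then show ?thesis by (rule LIMSEQ_imp_Cauchy)
qed

lemma Xs_clin: "clin T \<Longrightarrow> clin (Xs T k n)"
proof (induction n)
  case 0 then show ?case by (simp add: clin_def)
next
  case (Suc n)
  then show ?case unfolding clin_def
    by (simp add: Sop_def clin_simps[OF \<open>clin T\<close>] clin_simps[OF Suc.IH[OF Suc.prems]]
        algebra_simps scaleR_cscale_comm cscale_add_right cscale_diff_right)
qed

lemma Xs_inter:
  assumes B: "clin B" and BT: "\<And>x. B (U x) = V (B x)"
  shows "B (Xs U k n x) = Xs V k n (B x)"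
proof (induction n arbitrary: x)
  case 0 then show ?case by (simp add: clin_zero[OF B])
next
  case (Suc n)
  show ?case by (simp add: clin_simps[OF B] Suc.IH Sop_def BT)
qed

lemma Xs_sadj: "sadj T \<Longrightarrow> clin T \<Longrightarrow> sadj (Xs T k n)"
proof (induction n)
  case 0 then show ?case by (simp add: sadj_def)
next
  case (Suc n)
  then have h: "sadj (Xs T k n)" by simp
  show ?case unfolding sadj_def
    by (simp add: Sop_def cinner_simps sadjD[OF h] sadjD[OF Suc.prems(1)])
qed

locale sq =
  fixes T :: "'a::chilbert_space \<Rightarrow> 'a" and k :: real
  assumes T_clin: "clin T" and T_sadj: "sadj T" and T_pos: "\<And>x. 0 \<le> Re (cinner (T x) x)"
    and T_bnd: "bnd T k" and k_pos: "0 < k"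
begin

lemma T_sq_le: "(norm (T x))\<^sup>2 \<le> k * Re (cinner (T x) x)"
proof (cases "norm (T x) = 0")
  case True then show ?thesis using T_pos[of x] k_pos by simp
next
  case False
  have "(cmod (cinner (T x) (T x)))\<^sup>2 \<le> Re (cinner (T x) x) * Re (cinner (T (T x)) (T x))"
    by (rule gen_CS[OF T_clin T_sadj T_pos])
  moreover have "cmod (cinner (T x) (T x)) = (norm (T x))\<^sup>2"
    by (simp add: cinner_self_real del: of_real_power)
  moreover have "Re (cinner (T (T x)) (T x)) \<le> k * (norm (T x))\<^sup>2"
  proof -
    have "Re (cinner (T (T x)) (T x)) \<le> norm (T (T x)) * norm (T x)" by (rule Re_cinner_le)
    also have "\<dots> \<le> k * norm (T x) * norm (T x)"
      by (rule mult_right_mono) (auto intro: bndD[OF T_bnd])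
    finally show ?thesis by (simp add: power2_eq_square mult_ac)
  qed
  ultimately have A: "(norm (T x))\<^sup>2 * (norm (T x))\<^sup>2 \<le> Re (cinner (T x) x) * Re (cinner (T (T x)) (T x))"
    by (simp add: power2_eq_square)
  have B: "Re (cinner (T x) x) * Re (cinner (T (T x)) (T x)) \<le> Re (cinner (T x) x) * (k * (norm (T x))\<^sup>2)"
    by (rule mult_left_mono) (fact, rule T_pos)
  from A B have "(norm (T x))\<^sup>2 * (norm (T x))\<^sup>2 \<le> (k * Re (cinner (T x) x)) * (norm (T x))\<^sup>2"
    by (simp add: mult_ac)
  moreover have "0 < (norm (T x))\<^sup>2" using False by simp
  ultimately show ?thesis by (rule mult_right_le_imp_le)
qed

lemma S_clin: "clin (Sop T k)"
  unfolding clin_def Sop_def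
  by (simp add: clin_simps[OF T_clin] cscale_diff_right scaleR_cscale_comm scaleR_add_right)

lemma S_sadj: "sadj (Sop T k)"
  unfolding sadj_def Sop_def by (simp add: cinner_simps sadjD[OF T_sadj])

lemma S_bnd: "bnd (Sop T k) 1"
  unfolding bnd_def
proof
  fix x
  define c where "c = 1 / k"
  have c: "0 < c" "c * k = 1" using k_pos by (auto simp: c_def)
  have re: "Re (cinner x (T x)) = Re (cinner (T x) x)" using sadjD[OF T_sadj, of x x] by simp
  have "cinner (x - c *\<^sub>R T x) (x - c *\<^sub>R T x) = cinner x x - complex_of_real c * cinner x (T x)
      - complex_of_real c * cinner (T x) x + complex_of_real (c * c) * cinner (T x) (T x)"
    by (simp add: cinner_simps algebra_simps)
  then have e1: "(norm (Sop T k x))\<^sup>2 = (norm x)\<^sup>2 - 2 * c * Re (cinner (T x) x) + (c * c) * (norm (T x))\<^sup>2"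
    unfolding Sop_def c_def[symmetric] using re
    by (simp add: norm_sq_cinner)
  have e2: "(c * c) * (norm (T x))\<^sup>2 \<le> (c * c) * (k * Re (cinner (T x) x))"
    by (rule mult_left_mono[OF T_sq_le]) simp
  have e3: "(c * c) * (k * Re (cinner (T x) x)) = c * Re (cinner (T x) x)"
    using c by (metis mult.assoc mult.left_commute mult_1)
  from e1 e2 e3 have h: "(norm (Sop T k x))\<^sup>2 \<le> (norm x)\<^sup>2 - 2 * c * Re (cinner (T x) x) + c * Re (cinner (T x) x)" by linarith
  have "0 \<le> c * Re (cinner (T x) x)" using c T_pos[of x] by simp
  with h have "(norm (Sop T k x))\<^sup>2 \<le> (norm x)\<^sup>2" by linarith
  then show "norm (Sop T k x) \<le> 1 * norm x" using power2_le_imp_le by force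
qed

abbreviation X where "X \<equiv> Xs T k"

lemma X_clin: "clin (X n)" by (rule Xs_clin[OF T_clin])
lemma X_sadj: "sadj (X n)" by (rule Xs_sadj[OF T_sadj T_clin])
lemma X_T: "X n (T x) = T (X n x)"
proof -
  have "T (X n x) = X n (T x)" by (rule Xs_inter[OF T_clin]) (rule refl)
  then show ?thesis by simp
qed
lemma X_comm: "X n (X m x) = X m (X n x)"
  by (rule Xs_inter[where B="X m" and U=T and V=T, OF X_clin X_T, symmetric])

definition dx where "dx n = xs (Suc n) - xs n"

lemma X_bounds: "bnd (X n) (xs n) \<and> bnd (\<lambda>x. X (Suc n) x - X n x) (dx n)"
proof (induction n)
  case 0
  have "bnd (\<lambda>x. (1/2) *\<^sub>R Sop T k x) (1/2)"
    using S_bnd by (simp add: bnd_def)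
  then show ?case by (simp add: dx_def bnd_def)
next
  case (Suc n)
  have b0: "bnd (X n) (xs n)" and d0: "bnd (\<lambda>x. X (Suc n) x - X n x) (dx n)" using Suc by auto
  have b1: "bnd (X (Suc n)) (xs (Suc n))" unfolding bnd_def
  proof
    fix x
    have "norm (X (Suc n) x) \<le> norm (X n x) + norm (X (Suc n) x - X n x)"
      by (metis add.commute diff_add_cancel norm_triangle_ineq)
    also have "\<dots> \<le> xs n * norm x + dx n * norm x"
      using bndD[OF b0, of x] bndD[OF d0, of x] by simp
    finally show "norm (X (Suc n) x) \<le> xs (Suc n) * norm x" by (simp add: dx_def algebra_simps)
  qed
  have eq: "X (Suc (Suc n)) x - X (Suc n) x =
      (1/2) *\<^sub>R (X (Suc n) (X (Suc n) x - X n x) + X n (X (Suc n) x - X n x))" for x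
  proof -
    have a: "X (Suc (Suc n)) x = (1/2) *\<^sub>R (Sop T k x + X (Suc n) (X (Suc n) x))"
      by (simp only: Xs.simps(2)[of T k "Suc n"])
    have b: "X (Suc n) x = (1/2) *\<^sub>R (Sop T k x + X n (X n x))"
      by (simp only: Xs.simps(2)[of T k n])
    have c: "X (Suc n) (X (Suc n) x) - X n (X n x) =
        X (Suc n) (X (Suc n) x - X n x) + X n (X (Suc n) x - X n x)"
      using X_comm[of n "Suc n" x] by (simp add: clin_simps[OF X_clin] del: Xs.simps)
    have "X (Suc (Suc n)) x - X (Suc n) x = (1/2) *\<^sub>R (Sop T k x + X (Suc n) (X (Suc n) x))
        - (1/2) *\<^sub>R (Sop T k x + X n (X n x))"
      by (rule arg_cong2[where f=minus, OF a b])
    also have "\<dots> = (1/2) *\<^sub>R (X (Suc n) (X (Suc n) x) - X n (X n x))"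
      by (simp add: algebra_simps del: Xs.simps)
    finally have "X (Suc (Suc n)) x - X (Suc n) x = (1/2) *\<^sub>R (X (Suc n) (X (Suc n) x) - X n (X n x))" .
    then show ?thesis using c by simp
  qed
  have d1: "bnd (\<lambda>x. X (Suc (Suc n)) x - X (Suc n) x) (dx (Suc n))" unfolding bnd_def
  proof
    fix x
    have "norm (X (Suc (Suc n)) x - X (Suc n) x) \<le>
        (1/2) * (norm (X (Suc n) (X (Suc n) x - X n x)) + norm (X n (X (Suc n) x - X n x)))"
      unfolding eq norm_scaleR by (simp add: norm_triangle_ineq del: Xs.simps)
    also have "\<dots> \<le> (1/2) * (xs (Suc n) * (dx n * norm x) + xs n * (dx n * norm x))"
    proof -
      have a: "norm (X (Suc n) x - X n x) \<le> dx n * norm x" by (rule bndD[OF d0])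
      have "norm (X (Suc n) (X (Suc n) x - X n x)) \<le> xs (Suc n) * (dx n * norm x)"
        by (rule order_trans[OF bndD[OF b1] mult_left_mono[OF a]]) (use xs_bounds[of "Suc n"] in blast)
      moreover have "norm (X n (X (Suc n) x - X n x)) \<le> xs n * (dx n * norm x)"
        by (rule order_trans[OF bndD[OF b0] mult_left_mono[OF a]]) (use xs_bounds[of n] in blast)
      ultimately show ?thesis by simp
    qed
    also have "\<dots> = dx (Suc n) * norm x"
      by (simp add: dx_def power2_eq_square algebra_simps)
    finally show "norm (X (Suc (Suc n)) x - X (Suc n) x) \<le> dx (Suc n) * norm x" .
  qed
  show ?case using b1 d1 by simp
qed

lemma X_bnd: "bnd (X n) (xs n)" using X_bounds by blast

lemma X_cauchy_bound:
  assumes "n \<le> m" shows "norm (X m x - X n x) \<le> (xs m - xs n) * norm x"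
  using assms
proof (induction m rule: dec_induct)
  case base then show ?case by simp
next
  case (step m)
  have "norm (X (Suc m) x - X n x) \<le> norm (X (Suc m) x - X m x) + norm (X m x - X n x)"
    by (metis diff_add_cancel add_diff_eq norm_triangle_ineq)
  also have "\<dots> \<le> dx m * norm x + (xs m - xs n) * norm x"
    using X_bounds[of m] step.IH by (meson add_mono bndD)
  finally show ?case by (simp add: dx_def algebra_simps)
qed

lemma X_conv: "(\<lambda>n. X n x) \<longlonglongrightarrow> Xlim T k x"
proof -
  have "Cauchy (\<lambda>n. X n x)"
  proof (rule CauchyI)
    fix e :: real assume e: "0 < e"
    have "0 < e / (norm x + 1)" using e by (simp add: add_nonneg_pos)
    from CauchyD[OF xs_Cauchy this] obtain M where
      M: "\<And>m n. M \<le> m \<Longrightarrow> M \<le> n \<Longrightarrow> norm (xs m - xs n) < e / (norm x + 1)" by blast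
    have "norm (X m x - X n x) < e" if "M \<le> m" "M \<le> n" for m n
    proof -
      have gen: "norm (X m x - X n x) \<le> \<bar>xs m - xs n\<bar> * norm x" for m n
      proof (cases "n \<le> m")
        case True then show ?thesis using X_cauchy_bound[OF True, of x] xs_incseq
          by (smt (verit, best) incseq_def mult_right_mono norm_ge_zero)
      next
        case False then have "m \<le> n" by simp
        then show ?thesis using X_cauchy_bound[of m n x] xs_incseq
          by (smt (verit, best) incseq_def mult_right_mono norm_ge_zero norm_minus_commute)
      qed
      have "\<bar>xs m - xs n\<bar> * norm x \<le> e / (norm x + 1) * norm x"
        by (rule mult_right_mono) (use M[OF that] in auto)
      also have "\<dots> < e"
      proof -
        have p: "0 < norm x + 1" by (simp add: add_nonneg_pos)
        have "e * norm x < e * (norm x + 1)" using e by simp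
        then have "e * norm x / (norm x + 1) < e" using p by (simp add: pos_divide_less_eq)
        then show ?thesis by simp
      qed
      finally show ?thesis using gen[of m n] by simp
    qed
    then show "\<exists>M. \<forall>m\<ge>M. \<forall>n\<ge>M. norm (X m x - X n x) < e" by blast
  qed
  then show ?thesis unfolding Xlim_def using Cauchy_convergent convergent_LIMSEQ_iff by blast
qed

end

lemma pos_zero:
  assumes T: "clin T" "sadj T" "\<And>x. 0 \<le> Re (cinner (T x) x)" and z: "Re (cinner (T v) v) = 0"
  shows "T v = 0"
proof -
  have "(cmod (cinner (T v) (T v)))\<^sup>2 \<le> Re (cinner (T v) v) * Re (cinner (T (T v)) (T v))"
    by (rule gen_CS[OF T])
  then have "cmod (cinner (T v) (T v)) = 0" using z by simp
  then show ?thesis using cinner_eq_zero_iff by auto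
qed

context sq begin

abbreviation XL where "XL \<equiv> Xlim T k"

lemma XL_clin: "clin XL"
  unfolding clin_def
proof (intro conjI allI)
  fix x y
  have "(\<lambda>n. X n x + X n y) \<longlonglongrightarrow> XL x + XL y" by (intro tendsto_add X_conv)
  moreover have "(\<lambda>n. X n x + X n y) = (\<lambda>n. X n (x + y))" by (simp add: clin_add[OF X_clin] del: Xs.simps)
  ultimately have "(\<lambda>n. X n (x + y)) \<longlonglongrightarrow> XL x + XL y" by simp
  from LIMSEQ_unique[OF X_conv this] show "XL (x + y) = XL x + XL y" .
next
  fix c x
  have "(\<lambda>n. c *\<^sub>C X n x) \<longlonglongrightarrow> c *\<^sub>C XL x" by (intro tendsto_cscale X_conv)
  moreover have "(\<lambda>n. c *\<^sub>C X n x) = (\<lambda>n. X n (c *\<^sub>C x))" by (simp add: clin_cscale[OF X_clin] del: Xs.simps)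
  ultimately have "(\<lambda>n. X n (c *\<^sub>C x)) \<longlonglongrightarrow> c *\<^sub>C XL x" by simp
  from LIMSEQ_unique[OF X_conv this] show "XL (c *\<^sub>C x) = c *\<^sub>C XL x" .
qed

lemma XL_bnd: "bnd XL 1"
  unfolding bnd_def
proof
  fix x
  have "(\<lambda>n. norm (X n x)) \<longlonglongrightarrow> norm (XL x)" by (intro tendsto_norm X_conv)
  moreover have "norm (X n x) \<le> norm x" for n
    by (rule order_trans[OF bndD[OF X_bnd, of n x]]) (rule mult_left_le_one_le, use xs_bounds[of n] in auto)
  ultimately have "norm (XL x) \<le> norm x" by (intro LIMSEQ_le_const2) auto
  then show "norm (XL x) \<le> 1 * norm x" by simp
qed

lemma XL_sadj: "sadj XL"
  unfolding sadj_def
proof (intro allI)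
  fix x y
  have "(\<lambda>n. cinner (X n x) y) \<longlonglongrightarrow> cinner (XL x) y" by (intro tendsto_cinner_left X_conv)
  moreover have "(\<lambda>n. cinner x (X n y)) \<longlonglongrightarrow> cinner x (XL y)" by (intro tendsto_cinner_right X_conv)
  moreover have "(\<lambda>n. cinner (X n x) y) = (\<lambda>n. cinner x (X n y))" using sadjD[OF X_sadj] by blast
  ultimately show "cinner (XL x) y = cinner x (XL y)" using LIMSEQ_unique by simp
qed

lemma XL_fix: "XL x = (1/2) *\<^sub>R (Sop T k x + XL (XL x))"
proof -
  have "(\<lambda>n. X n (X n x)) \<longlonglongrightarrow> XL (XL x)"
  proof -
    have "(\<lambda>n. norm (X n x - XL x) + norm (X n (XL x) - XL (XL x))) \<longlonglongrightarrow> 0 + 0"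
      by (intro tendsto_add; rule tendsto_norm_zero; rule LIM_zero; rule X_conv)
    then have "(\<lambda>n. norm (X n x - XL x) + norm (X n (XL x) - XL (XL x))) \<longlonglongrightarrow> 0" by simp
    then have "(\<lambda>n. X n (X n x) - XL (XL x)) \<longlonglongrightarrow> 0"
    proof (rule Lim_null_comparison[rotated], intro always_eventually allI)
      fix n
      have "X n (X n x) - XL (XL x) = X n (X n x - XL x) + (X n (XL x) - XL (XL x))"
        by (simp add: clin_diff[OF X_clin] del: Xs.simps)
      then have "norm (X n (X n x) - XL (XL x)) \<le> norm (X n (X n x - XL x)) + norm (X n (XL x) - XL (XL x))"
        using norm_triangle_ineq[of "X n (X n x - XL x)" "X n (XL x) - XL (XL x)"] by (simp only:)
      also have "norm (X n (X n x - XL x)) \<le> norm (X n x - XL x)"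
        by (rule order_trans[OF bndD[OF X_bnd, of n "X n x - XL x"]]) (rule mult_left_le_one_le, use xs_bounds[of n] in auto)
      finally show "norm (X n (X n x) - XL (XL x)) \<le> norm (X n x - XL x) + norm (X n (XL x) - XL (XL x))"
        by simp
    qed
    then show ?thesis by (rule LIM_zero_cancel)
  qed
  then have "(\<lambda>n. X (Suc n) x) \<longlonglongrightarrow> (1/2) *\<^sub>R (Sop T k x + XL (XL x))"
    by (simp only: Xs.simps) (intro tendsto_intros)
  moreover have "(\<lambda>n. X (Suc n) x) \<longlonglongrightarrow> XL x" by (rule LIMSEQ_Suc[OF X_conv])
  ultimately show ?thesis using LIMSEQ_unique by blast
qed

definition R where "R = csq T k"

lemma R_clin: "clin R"
  unfolding R_def csq_def clin_def
  by (simp add: clin_simps[OF XL_clin] scaleR_cscale_comm cscale_diff_right algebra_simps scaleR_add_right)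

lemma R_bnd: "bnd R (2 * sqrt k)"
  unfolding bnd_def R_def csq_def
proof
  fix x
  have "norm (x - XL x) \<le> norm x + norm (XL x)" by (rule norm_triangle_ineq4)
  also have "\<dots> \<le> 2 * norm x" using bndD[OF XL_bnd, of x] by simp
  finally show "norm (sqrt k *\<^sub>R (x - XL x)) \<le> 2 * sqrt k * norm x"
    using k_pos by (simp add: mult_left_mono mult.assoc)
qed

lemma R_sadj: "sadj R"
  unfolding sadj_def R_def csq_def by (simp add: cinner_simps sadjD[OF XL_sadj])

lemma R_pos: "0 \<le> Re (cinner (R x) x)"
proof -
  have "Re (cinner (R x) x) = sqrt k * ((norm x)\<^sup>2 - Re (cinner (XL x) x))"
    unfolding R_def csq_def by (simp add: cinner_simps norm_sq_cinner)
  moreover have "Re (cinner (XL x) x) \<le> (norm x)\<^sup>2"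
  proof -
    have "Re (cinner (XL x) x) \<le> norm (XL x) * norm x" by (rule Re_cinner_le)
    also have "\<dots> \<le> norm x * norm x" using bndD[OF XL_bnd, of x] by (simp add: mult_right_mono)
    finally show ?thesis by (simp add: power2_eq_square)
  qed
  ultimately show ?thesis using k_pos by simp
qed

lemma R_cpositive: "cpositive R"
  unfolding cpositive_def
  using clin_bnd_cbl[OF R_clin R_bnd] R_pos sadj_real[OF R_sadj] by blast

lemma R_sq: "R (R x) = T x"
proof -
  have "2 *\<^sub>R XL x = 2 *\<^sub>R ((1/2) *\<^sub>R (Sop T k x + XL (XL x)))"
    using XL_fix[of x] by (rule arg_cong)
  then have e: "2 *\<^sub>R XL x = Sop T k x + XL (XL x)" by simp
  have f: "XL (XL x) = 2 *\<^sub>R XL x - Sop T k x"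
    using e by (metis add_diff_cancel_left')
  have "R (R x) = sqrt k *\<^sub>R (sqrt k *\<^sub>R (x - XL x) - XL (sqrt k *\<^sub>R (x - XL x)))"
    by (simp add: R_def csq_def)
  also have "\<dots> = (sqrt k * sqrt k) *\<^sub>R (x - XL x - (XL x - XL (XL x)))"
    by (simp add: clin_simps[OF XL_clin] algebra_simps)
  also have "\<dots> = k *\<^sub>R ((1 / k) *\<^sub>R T x)"
  proof -
    have kk: "(k * 2) *\<^sub>R v = k *\<^sub>R v + k *\<^sub>R v" for v :: 'a
      by (metis mult_2_right scaleR_left_distrib)
    show ?thesis using k_pos by (simp add: f Sop_def algebra_simps kk)
  qed
  also have "\<dots> = T x" using k_pos by simp
  finally show ?thesis .
qed

lemma R_comm:
  assumes B: "clin B" "bnd B K" and BT: "\<And>x. B (T x) = T (B x)"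
  shows "B (R x) = R (B x)"
proof -
  have "B (XL x) = XL (B x)"
  proof -
    have "(\<lambda>n. B (X n x)) \<longlonglongrightarrow> B (XL x)" by (rule tendsto_op[OF B X_conv])
    moreover have "(\<lambda>n. B (X n x)) = (\<lambda>n. X n (B x))"
      using Xs_inter[OF B(1), of T T k _ x] BT by simp
    ultimately have "(\<lambda>n. X n (B x)) \<longlonglongrightarrow> B (XL x)" by simp
    from LIMSEQ_unique[OF this X_conv] show ?thesis .
  qed
  then show ?thesis unfolding R_def csq_def by (simp add: clin_simps[OF B(1)])
qed

lemma R_unique:
  assumes P: "cpositive P" and PP: "\<And>x. P (P x) = T x"
  shows "P = R"
proof -
  have Pcbl: "cbounded_linear P" using P by (simp add: cpositive_def)
  have Pc: "clin P" by (rule cbl_clin[OF Pcbl])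
  obtain K where PK: "bnd P K" using cbl_bnd[OF Pcbl] by blast
  have Pp: "0 \<le> Re (cinner (P x) x)" for x using P by (simp add: cpositive_def)
  have Ps: "sadj P" by (rule polarization_sadj[OF Pc]) (use P in \<open>simp add: cpositive_def\<close>)
  have PT: "P (T x) = T (P x)" for x by (simp only: PP[symmetric])
  have PR: "P (R x) = R (P x)" for x by (rule R_comm[OF Pc PK PT])
  show ?thesis
  proof
    fix x
    define D where "D = (\<lambda>x. P x - R x)"
    have Dc: "clin D" unfolding D_def clin_def using Pc R_clin
      by (simp add: clin_simps algebra_simps cscale_diff_right)
    have Ds: "sadj D" unfolding D_def sadj_def
      by (simp add: cinner_simps sadjD[OF Ps] sadjD[OF R_sadj])
    define v where "v = D x"
    have sum0: "P v + R v = 0"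
      unfolding v_def D_def by (simp add: clin_simps[OF Pc] clin_simps[OF R_clin] PP R_sq PR)
    have "Re (cinner (P v) v) + Re (cinner (R v) v) = 0"
    proof -
      have "cinner (P v) v + cinner (R v) v = cinner (P v + R v) v" by (simp add: cinner_simps)
      then have h: "cinner (P v) v + cinner (R v) v = 0" using sum0 by simp
      show ?thesis using arg_cong[OF h, of Re] by simp
    qed
    then have "Re (cinner (P v) v) = 0" "Re (cinner (R v) v) = 0" using Pp[of v] R_pos[of v] by auto
    then have "P v = 0" "R v = 0"
      using pos_zero[OF Pc Ps Pp] pos_zero[OF R_clin R_sadj R_pos] by auto
    then have "D v = 0" by (simp add: D_def)
    then have "cinner (D x) (D x) = 0" using sadjD[OF Ds, of x "D x"] by (simp add: v_def)
    then show "P x = R x" by (simp add: D_def cinner_eq_zero_iff)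
  qed
qed

lemma the_root: "(THE P. cpositive P \<and> P \<circ> P = T) = R"
proof (rule the_equality)
  show "cpositive R \<and> R \<circ> R = T" using R_cpositive R_sq by (auto simp: comp_def)
next
  fix P assume h: "cpositive P \<and> P \<circ> P = T"
  show "P = R" by (rule R_unique) (use h in \<open>auto simp: fun_eq_iff\<close>)
qed

end

lemma Xlim_inter:
  assumes s1: "sq T1 k" and s2: "sq T2 k" and B: "clin B" "bnd B K"
    and BT: "\<And>x. B (T1 x) = T2 (B x)"
  shows "B (csq T1 k x) = csq T2 k (B x)"
proof -
  have "B (Xlim T1 k x) = Xlim T2 k (B x)"
  proof -
    have "(\<lambda>n. B (Xs T1 k n x)) \<longlonglongrightarrow> B (Xlim T1 k x)" by (rule tendsto_op[OF B sq.X_conv[OF s1]])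
    moreover have "(\<lambda>n. B (Xs T1 k n x)) = (\<lambda>n. Xs T2 k n (B x))"
      using Xs_inter[OF B(1), of T1 T2 k _ x] BT by simp
    ultimately have "(\<lambda>n. Xs T2 k n (B x)) \<longlonglongrightarrow> B (Xlim T1 k x)" by simp
    from LIMSEQ_unique[OF this sq.X_conv[OF s2]] show ?thesis .
  qed
  then show ?thesis unfolding csq_def by (simp add: clin_simps[OF B(1)])
qed

lemma closure_csubspace:
  fixes M :: "'a::chilbert_space set"
  assumes "csubspace M" shows "csubspace (closure M)"
proof -
  have M0: "0 \<in> M" and Madd: "\<And>u v. u \<in> M \<Longrightarrow> v \<in> M \<Longrightarrow> u + v \<in> M"
    and Msc: "\<And>c u. u \<in> M \<Longrightarrow> c *\<^sub>C u \<in> M" using assms by (auto simp: csubspace_def)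
  show ?thesis unfolding csubspace_def
  proof (intro conjI ballI allI)
    show "0 \<in> closure M" using M0 closure_subset by blast
  next
    fix u v assume "u \<in> closure M" "v \<in> closure M"
    then obtain f g where f: "\<And>n. f n \<in> M" "f \<longlonglongrightarrow> u" and g: "\<And>n. g n \<in> M" "g \<longlonglongrightarrow> v"
      unfolding closure_sequential by blast
    have l: "(\<lambda>n. f n + g n) \<longlonglongrightarrow> u + v" by (intro tendsto_add f g)
    have m: "\<forall>n. f n + g n \<in> M" using f g Madd by blast
    show "u + v \<in> closure M" unfolding closure_sequential
      by (rule exI[of _ "\<lambda>n. f n + g n"]) (use l m in simp)
  next
    fix c u assume "u \<in> closure M"
    then obtain f where f: "\<And>n. f n \<in> M" "f \<longlonglongrightarrow> u"
      unfolding closure_sequential by blast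
    have l: "(\<lambda>n. c *\<^sub>C f n) \<longlonglongrightarrow> c *\<^sub>C u" by (intro tendsto_cscale f)
    have m: "\<forall>n. c *\<^sub>C f n \<in> M" using f Msc by blast
    show "c *\<^sub>C u \<in> closure M" unfolding closure_sequential
      by (rule exI[of _ "\<lambda>n. c *\<^sub>C f n"]) (use l m in simp)
  qed
qed

lemma range_csubspace: assumes T: "clin T" shows "csubspace (range T)"
  unfolding csubspace_def
proof (intro conjI ballI allI)
  show "0 \<in> range T" using clin_zero[OF T] by (metis rangeI)
  fix u v assume "u \<in> range T" "v \<in> range T"
  then obtain a b where "u = T a" "v = T b" by blast
  then have "u + v = T (a + b)" by (simp add: clin_add[OF T])
  then show "u + v \<in> range T" by simp
next
  fix c u assume "u \<in> range T"
  then obtain a where "u = T a" by blast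
  then have "c *\<^sub>C u = T (c *\<^sub>C a)" by (simp add: clin_cscale[OF T])
  then show "c *\<^sub>C u \<in> range T" by simp
qed

lemma sq_intro:
  assumes "clin T" "sadj T" "\<And>x. 0 \<le> Re (cinner (T x) x)" "bnd T K" "K \<le> k" "0 < k"
  shows "sq T k"
  unfolding sq_def using assms(1-3,6) bnd_mono[OF assms(4,5)] by simp

lemma comp_clin: "clin T \<Longrightarrow> clin U \<Longrightarrow> clin (\<lambda>x. T (U x))"
  by (simp add: clin_def)

lemma adjM_props:
  fixes T :: "'a::chilbert_space \<Rightarrow> 'a"
  assumes T: "cbounded_linear T" "bnd T K" "0 \<le> K"
  shows "clin (\<lambda>x. adj T (T x))" "sadj (\<lambda>x. adj T (T x))"
    "\<And>x. 0 \<le> Re (cinner (adj T (T x)) x)" "bnd (\<lambda>x. adj T (T x)) (K * K)"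
proof -
  show "clin (\<lambda>x. adj T (T x))" by (rule comp_clin[OF adj_clin[OF T(1)] cbl_clin[OF T(1)]])
  show "sadj (\<lambda>x. adj T (T x))" unfolding sadj_def
    by (simp add: adj_prop'[OF T(1)] adj_prop[OF T(1)])
  show "0 \<le> Re (cinner (adj T (T x)) x)" for x
    by (simp add: adj_prop'[OF T(1)] cinner_ge_zero)
  show "bnd (\<lambda>x. adj T (T x)) (K * K)"
    by (rule bnd_comp[OF adj_bnd[OF T] T(2) T(3)])
qed

lemma op_abs_csq:
  fixes T :: "'a::chilbert_space \<Rightarrow> 'a"
  assumes "sq (\<lambda>x. adj T (T x)) k"
  shows "op_abs T = csq (\<lambda>x. adj T (T x)) k"
proof -
  have "adj T \<circ> T = (\<lambda>x. adj T (T x))" by (simp add: comp_def)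
  then show ?thesis unfolding op_abs_def using sq.the_root[OF assms] sq.R_def[OF assms] by simp
qed

lemma bl_of:
  assumes "clin T" "bnd T K" shows "bounded_linear T"
proof (rule bounded_linear_intro[where K = K])
  show "T (x + y) = T x + T y" for x y by (rule clin_add[OF assms(1)])
  show "T (r *\<^sub>R x) = r *\<^sub>R T x" for r x by (rule clin_scaleR[OF assms(1)])
  show "norm (T x) \<le> norm x * K" for x using bndD[OF assms(2), of x] by (simp add: mult.commute)
qed

lemma op_abs_sq:
  fixes T :: "'a::chilbert_space \<Rightarrow> 'a"
  assumes T: "cbounded_linear T"
  shows "op_abs T (op_abs T x) = adj T (T x)"
proof -
  obtain K where K: "K > 0" "bnd T K" using cbl_bnd[OF T] by blast
  have s: "sq (\<lambda>x. adj T (T x)) (K * K)"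
    using adjM_props[OF T K(2)] K(1) by (intro sq_intro) auto
  show ?thesis using op_abs_csq[OF s] sq.R_sq[OF s] sq.R_def[OF s] by simp
qed

lemma shift_cbl:
  fixes T :: "'a::complex_inner \<Rightarrow> 'a"
  assumes T: "cbounded_linear T" shows "cbounded_linear (\<lambda>y. T y - c *\<^sub>C y)"
proof -
  have Tc: "clin T" by (rule cbl_clin[OF T])
  obtain K where K: "bnd T K" using cbl_bnd[OF T] by blast
  have "clin (\<lambda>y. T y - c *\<^sub>C y)" unfolding clin_def
    by (simp add: clin_simps[OF Tc] cscale_add_right cscale_cscale mult.commute cscale_diff_right)
  moreover have "bnd (\<lambda>y. T y - c *\<^sub>C y) (K + cmod c)" unfolding bnd_def
  proof
    fix y
    have "norm (T y - c *\<^sub>C y) \<le> norm (T y) + norm (c *\<^sub>C y)" by (rule norm_triangle_ineq4)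
    also have "\<dots> \<le> K * norm y + cmod c * norm y" using bndD[OF K, of y] by (simp add: norm_cscale)
    finally show "norm (T y - c *\<^sub>C y) \<le> (K + cmod c) * norm y" by (simp add: algebra_simps)
  qed
  ultimately show ?thesis by (rule clin_bnd_cbl)
qed

locale mainA =
  fixes A :: "'a::chilbert_space \<Rightarrow> 'a"
  assumes A_cbl: "cbounded_linear A"
begin

definition KA where "KA = (SOME K. K > 0 \<and> bnd A K)"
lemma KA: "KA > 0" "bnd A KA"
  using someI_ex[OF cbl_bnd[OF A_cbl]] unfolding KA_def by auto

lemma A_clin: "clin A" by (rule cbl_clin[OF A_cbl])
lemma A'_cbl: "cbounded_linear (adj A)" by (rule adj_cbl[OF A_cbl])
lemma A'_bnd: "bnd (adj A) KA" using adj_bnd[OF A_cbl KA(2)] KA(1) by simp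

definition k0 where "k0 = KA * KA"
lemma k0_pos: "0 < k0" using KA(1) by (simp add: k0_def)

definition M1 where "M1 = (\<lambda>x. adj A (A x))"
definition M2 where "M2 = (\<lambda>x. A (adj A x))"

lemma sq1: "sq M1 k0"
  unfolding M1_def using adjM_props[OF A_cbl KA(2)] KA(1) k0_pos
  by (intro sq_intro) (auto simp: k0_def)

lemma M2_eq: "M2 = (\<lambda>x. adj (adj A) (adj A x))"
  by (simp add: M2_def adj_adj[OF A_cbl])

lemma sq2: "sq M2 k0"
  unfolding M2_eq using adjM_props[OF A'_cbl A'_bnd] KA(1) k0_pos
  by (intro sq_intro) (auto simp: k0_def)

definition P where "P = csq M1 k0"
definition Q where "Q = csq M2 k0"

lemma P_abs: "op_abs A = P"
  unfolding P_def using op_abs_csq[OF sq1[unfolded M1_def]] by (simp add: M1_def)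

lemma Q_abs: "op_abs (adj A) = Q"
  unfolding Q_def using op_abs_csq[OF sq2[unfolded M2_eq]] by (simp add: M2_eq)

lemma P_props: "clin P" "sadj P" "\<And>x. 0 \<le> Re (cinner (P x) x)" "bnd P (2 * sqrt k0)" "\<And>x. P (P x) = M1 x"
  using sq.R_clin[OF sq1] sq.R_sadj[OF sq1] sq.R_pos[OF sq1] sq.R_bnd[OF sq1] sq.R_sq[OF sq1]
  unfolding sq.R_def[OF sq1] P_def by auto

lemma Q_props: "clin Q" "sadj Q" "\<And>x. 0 \<le> Re (cinner (Q x) x)" "bnd Q (2 * sqrt k0)" "\<And>x. Q (Q x) = M2 x"
  using sq.R_clin[OF sq2] sq.R_sadj[OF sq2] sq.R_pos[OF sq2] sq.R_bnd[OF sq2] sq.R_sq[OF sq2]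
  unfolding sq.R_def[OF sq2] Q_def by auto

definition k1 where "k1 = 2 * sqrt k0"
lemma k1_pos: "0 < k1" using k0_pos by (simp add: k1_def)

lemma sqP: "sq P k1" using P_props k1_pos by (intro sq_intro) (auto simp: k1_def)
lemma sqQ: "sq Q k1" using Q_props k1_pos by (intro sq_intro) (auto simp: k1_def)

definition R where "R = csq P k1"
definition S where "S = csq Q k1"

lemma R_props: "clin R" "sadj R" "\<And>x. R (R x) = P x"
  using sq.R_clin[OF sqP] sq.R_sadj[OF sqP] sq.R_sq[OF sqP]
  unfolding sq.R_def[OF sqP] R_def by auto

lemma S_props: "clin S" "sadj S" "\<And>x. S (S x) = Q x"
  using sq.R_clin[OF sqQ] sq.R_sadj[OF sqQ] sq.R_sq[OF sqQ]
  unfolding sq.R_def[OF sqQ] S_def by auto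

lemma AP: "A (P x) = Q (A x)"
  unfolding P_def Q_def
  by (rule Xlim_inter[OF sq1 sq2 A_clin KA(2)]) (simp add: M1_def M2_def)

lemma AR: "A (R x) = S (A x)"
  unfolding R_def S_def
  by (rule Xlim_inter[OF sqP sqQ A_clin KA(2)]) (rule AP)

lemma normA: "norm (A z) = norm (P z)"
proof -
  have "(norm (A z))\<^sup>2 = Re (cinner (adj A (A z)) z)"
    by (simp add: norm_sq_cinner adj_prop'[OF A_cbl])
  also have "\<dots> = Re (cinner (P (P z)) z)" by (simp add: P_props(5) M1_def)
  also have "\<dots> = (norm (P z))\<^sup>2" by (simp add: norm_sq_cinner sadjD[OF P_props(2)])
  finally show ?thesis by (simp add: power2_eq_iff_nonneg)
qed

lemma mixed_range: "cmod (cinner (A (R z)) y) \<le> norm (R (R z)) * norm (S y)"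
proof -
  have "cinner (A (R z)) y = cinner (A z) (S y)" by (simp add: AR sadjD[OF S_props(2)])
  then have "cmod (cinner (A (R z)) y) \<le> norm (A z) * norm (S y)" using CS by simp
  also have "norm (A z) = norm (R (R z))" by (simp add: normA R_props(3))
  finally show ?thesis .
qed

lemma R_bnd: "\<exists>K. bnd R K"
  using sq.R_bnd[OF sqP] unfolding sq.R_def[OF sqP] R_def by blast

lemma mixed: "cmod (cinner (A x) y) \<le> norm (R x) * norm (S y)"
proof -
  let ?N = "closure (range R)"
  have cl: "closed ?N" by simp
  have sub: "csubspace ?N" by (rule closure_csubspace[OF range_csubspace[OF R_props(1)]])
  obtain m where mN: "m \<in> ?N" and orth: "\<And>u. u \<in> ?N \<Longrightarrow> cinner u (x - m) = 0"
    using projection[OF cl sub, of x] by blast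
  define n where "n = x - m"
  have "cinner (R z) n = 0" for z
  proof -
    have "R z \<in> ?N" using closure_subset[of "range R"] by blast
    then show ?thesis using orth n_def by simp
  qed
  then have "cinner z (R n) = 0" for z by (simp add: sadjD[OF R_props(2)])
  then have Rn: "R n = 0" using cinner_eq_zero_iff by blast
  then have "P n = 0" using R_props(3)[of n] clin_zero[OF R_props(1)] by simp
  then have An: "A n = 0" using normA[of n] by simp
  have xm: "x = m + n" by (simp add: n_def)
  have Ax: "A x = A m" using An xm clin_add[OF A_clin] by simp
  have Rx: "R x = R m" using Rn xm clin_add[OF R_props(1)] by simp
  obtain w where w: "\<And>j. w j \<in> range R" "w \<longlonglongrightarrow> m"
    using mN unfolding closure_sequential by blast
  obtain KR where KR: "bnd R KR" using R_bnd by blast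
  have "(\<lambda>j. cmod (cinner (A (w j)) y)) \<longlonglongrightarrow> cmod (cinner (A m) y)"
    by (intro tendsto_norm tendsto_cinner_left tendsto_op[OF A_clin KA(2)] w)
  moreover have "(\<lambda>j. norm (R (w j)) * norm (S y)) \<longlonglongrightarrow> norm (R m) * norm (S y)"
    by (intro tendsto_intros tendsto_op[OF R_props(1) KR] w)
  moreover have "cmod (cinner (A (w j)) y) \<le> norm (R (w j)) * norm (S y)" for j
    using w(1)[of j] mixed_range by auto
  ultimately have "cmod (cinner (A m) y) \<le> norm (R m) * norm (S y)"
    using LIMSEQ_le by blast
  then show ?thesis using Ax Rx by simp
qed

end

lemma op_abs_quad:
  fixes T :: "'a::chilbert_space \<Rightarrow> 'a"
  assumes T: "cbounded_linear T"
  shows "Re (cinner (op_abs T (op_abs T x)) x) = (norm (T x))\<^sup>2"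
  by (simp add: op_abs_sq[OF T] adj_prop'[OF T] norm_sq_cinner)

context mainA begin

lemma P_cbl: "cbounded_linear P" using clin_bnd_cbl P_props(1,4) by blast
lemma Q_cbl: "cbounded_linear Q" using clin_bnd_cbl Q_props(1,4) by blast

definition xiP where "xiP x = (let c = (1/2) * cinner (P x + Q x) x;
                B1 = op_abs (\<lambda>y. P y - c *\<^sub>C y);
                B2 = op_abs (\<lambda>y. Q y - c *\<^sub>C y)
            in Re (cinner (B1 (B1 x) + B2 (B2 x)) x))"

definition FP where "FP = (\<lambda>y. P (P y) + Q (Q y))"

lemma xiP_eq: "xiP x = (norm (P x - ((1/2) * cinner (P x + Q x) x) *\<^sub>C x))\<^sup>2
                     + (norm (Q x - ((1/2) * cinner (P x + Q x) x) *\<^sub>C x))\<^sup>2"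
  unfolding xiP_def Let_def
  by (simp add: cinner_add_left op_abs_quad[OF shift_cbl[OF P_cbl]] op_abs_quad[OF shift_cbl[OF Q_cbl]])

lemma xiP_nonneg: "0 \<le> xiP x" by (simp add: xiP_eq)

lemma FP_bl: "bounded_linear FP"
proof -
  have "clin FP" unfolding FP_def clin_def
    by (simp add: clin_simps[OF P_props(1)] clin_simps[OF Q_props(1)] cscale_add_right)
  moreover have "bnd FP (2 * ((2 * sqrt k0) * (2 * sqrt k0)))" unfolding bnd_def FP_def
  proof
    fix y
    have bp: "bnd (\<lambda>y. P (P y)) ((2 * sqrt k0) * (2 * sqrt k0))"
      by (rule bnd_comp[OF P_props(4) P_props(4)]) (use k0_pos in simp)
    have bq: "bnd (\<lambda>y. Q (Q y)) ((2 * sqrt k0) * (2 * sqrt k0))"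
      by (rule bnd_comp[OF Q_props(4) Q_props(4)]) (use k0_pos in simp)
    have "norm (P (P y) + Q (Q y)) \<le> norm (P (P y)) + norm (Q (Q y))" by (rule norm_triangle_ineq)
    also have "\<dots> \<le> (2 * sqrt k0) * (2 * sqrt k0) * norm y + (2 * sqrt k0) * (2 * sqrt k0) * norm y"
      by (rule add_mono[OF bndD[OF bp] bndD[OF bq]])
    finally show "norm (P (P y) + Q (Q y)) \<le> 2 * ((2 * sqrt k0) * (2 * sqrt k0)) * norm y"
      by (metis mult_2 distrib_right)
  qed
  ultimately show ?thesis by (rule bl_of)
qed

lemma key:
  assumes x: "norm x = 1"
  shows "(cmod (cinner (A x) x))\<^sup>2 \<le> (1/2) * (onorm FP - xiP x)"
proof -
  define a where "a = Re (cinner (P x) x)"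
  define b where "b = Re (cinner (Q x) x)"
  define cr where "cr = (a + b) / 2"
  have pa: "cinner (P x) x = complex_of_real a"
    using sadj_real[OF P_props(2), of x] by (simp add: a_def complex_eq_iff)
  have qb: "cinner (Q x) x = complex_of_real b"
    using sadj_real[OF Q_props(2), of x] by (simp add: b_def complex_eq_iff)
  have pa': "cinner x (P x) = complex_of_real a" using pa sadjD[OF P_props(2), of x x] by simp
  have qb': "cinner x (Q x) = complex_of_real b" using qb sadjD[OF Q_props(2), of x x] by simp
  have c: "(1/2) * cinner (P x + Q x) x = complex_of_real cr"
    by (simp add: cinner_add_left pa qb cr_def)
  have xx: "cinner x x = 1" using x by (simp add: cinner_self_real)
  have nP: "(norm (P x - complex_of_real cr *\<^sub>C x))\<^sup>2 = (norm (P x))\<^sup>2 - 2 * cr * a + cr\<^sup>2"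
  proof -
    have "cinner (P x - complex_of_real cr *\<^sub>C x) (P x - complex_of_real cr *\<^sub>C x)
        = cinner (P x) (P x) - complex_of_real cr * complex_of_real a - complex_of_real cr * complex_of_real a
          + complex_of_real cr * complex_of_real cr"
      by (simp add: cinner_simps pa pa' xx algebra_simps)
    then show ?thesis unfolding norm_sq_cinner by (simp add: power2_eq_square)
  qed
  have nQ: "(norm (Q x - complex_of_real cr *\<^sub>C x))\<^sup>2 = (norm (Q x))\<^sup>2 - 2 * cr * b + cr\<^sup>2"
  proof -
    have "cinner (Q x - complex_of_real cr *\<^sub>C x) (Q x - complex_of_real cr *\<^sub>C x)
        = cinner (Q x) (Q x) - complex_of_real cr * complex_of_real b - complex_of_real cr * complex_of_real b
          + complex_of_real cr * complex_of_real cr"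
      by (simp add: cinner_simps qb qb' xx algebra_simps)
    then show ?thesis unfolding norm_sq_cinner by (simp add: power2_eq_square)
  qed
  have xi: "xiP x = (norm (P x))\<^sup>2 + (norm (Q x))\<^sup>2 - 2 * cr\<^sup>2"
  proof -
    have "xiP x = (norm (P x))\<^sup>2 - 2 * cr * a + cr\<^sup>2 + ((norm (Q x))\<^sup>2 - 2 * cr * b + cr\<^sup>2)"
      unfolding xiP_eq c nP nQ ..
    also have "\<dots> = (norm (P x))\<^sup>2 + (norm (Q x))\<^sup>2 - 2 * cr\<^sup>2"
      unfolding cr_def by (simp add: power2_eq_square field_simps)
    finally show ?thesis .
  qed
  have s2: "(norm (P x))\<^sup>2 + (norm (Q x))\<^sup>2 \<le> onorm FP"
  proof -
    have "(norm (P x))\<^sup>2 + (norm (Q x))\<^sup>2 = Re (cinner (FP x) x)"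
      unfolding FP_def norm_sq_cinner by (simp add: cinner_add_left sadjD[OF P_props(2)] sadjD[OF Q_props(2)])
    also have "\<dots> \<le> norm (FP x) * norm x" by (rule Re_cinner_le)
    also have "\<dots> \<le> onorm FP" using onorm[OF FP_bl, of x] x by simp
    finally show ?thesis .
  qed
  have Ra: "(norm (R x))\<^sup>2 = a"
    unfolding norm_sq_cinner a_def by (simp add: sadjD[OF R_props(2)] R_props(3) sadjD[OF P_props(2), of x x])
  have Sb: "(norm (S x))\<^sup>2 = b"
    unfolding norm_sq_cinner b_def by (simp add: sadjD[OF S_props(2)] S_props(3) sadjD[OF Q_props(2), of x x])
  have "(cmod (cinner (A x) x))\<^sup>2 \<le> (norm (R x) * norm (S x))\<^sup>2"
    using mixed[of x x] by (simp add: power_mono)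
  also have "\<dots> = a * b" using Ra Sb by (simp add: power_mult_distrib)
  also have "\<dots> \<le> cr\<^sup>2"
  proof -
    have "0 \<le> (a - b)\<^sup>2" by simp
    then show ?thesis by (simp add: cr_def power2_eq_square algebra_simps)
  qed
  also have "\<dots> \<le> (1/2) * (onorm FP - xiP x)" using xi s2 by simp
  finally show ?thesis .
qed

end

theorem theorem2p9:
  fixes A :: "'a::chilbert_space \<Rightarrow> 'a"
  assumes "cbounded_linear A"
    and "\<exists>x::'a. x \<noteq> 0"
  shows "(numrad A)\<^sup>2 \<le>
    (1/2) * (onorm (\<lambda>y. op_abs A (op_abs A y) + op_abs (adj A) (op_abs (adj A) y))
      - (INF x\<in>{x::'a. norm x = 1}.
           (let c = (1/2) * cinner (op_abs A x + op_abs (adj A) x) x;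
                B1 = op_abs (\<lambda>y. op_abs A y - c *\<^sub>C y);
                B2 = op_abs (\<lambda>y. op_abs (adj A) y - c *\<^sub>C y)
            in Re (cinner (B1 (B1 x) + B2 (B2 x)) x))))"
proof -
  interpret mainA A by unfold_locales (rule assms(1))
  define U where "U = {x::'a. norm x = 1}"
  define \<beta> where "\<beta> = (1/2) * (onorm FP - (INF x\<in>U. xiP x))"
  obtain x0 :: 'a where "x0 \<noteq> 0" using assms(2) by blast
  define u0 where "u0 = (1 / norm x0) *\<^sub>R x0"
  have u0U: "u0 \<in> U" using \<open>x0 \<noteq> 0\<close> by (simp add: U_def u0_def)
  have Une: "U \<noteq> {}" using u0U by blast
  have bb: "bdd_below (xiP ` U)" by (rule bdd_belowI[of _ 0]) (auto simp: xiP_nonneg)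
  have each: "(cmod (cinner (A x) x))\<^sup>2 \<le> \<beta>" if "x \<in> U" for x
  proof -
    have "(INF x\<in>U. xiP x) \<le> xiP x" by (rule cINF_lower[OF bb that])
    then show ?thesis using key[of x] that by (simp add: U_def \<beta>_def)
  qed
  have b0: "0 \<le> \<beta>" using each[OF u0U] by (meson order_trans zero_le_power2)
  have each': "cmod (cinner (A x) x) \<le> sqrt \<beta>" if "x \<in> U" for x
    using each[OF that] by (simp add: real_le_rsqrt)
  have nr: "numrad A \<le> sqrt \<beta>" unfolding numrad_def U_def[symmetric]
    by (rule cSUP_least[OF Une each'])
  have nr0: "0 \<le> numrad A"
  proof -
    have "bdd_above ((\<lambda>x. cmod (cinner (A x) x)) ` U)" using each' by (intro bdd_aboveI) auto
    then have "cmod (cinner (A u0) u0) \<le> numrad A" unfolding numrad_def U_def[symmetric]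
      by (rule cSUP_upper[OF u0U])
    then show ?thesis by (meson norm_ge_zero order_trans)
  qed
  have main: "(numrad A)\<^sup>2 \<le> \<beta>"
    using power_mono[OF nr nr0, of 2] b0 by simp
  show ?thesis using main unfolding \<beta>_def U_def xiP_def FP_def P_abs[symmetric] Q_abs[symmetric] .
qed

end
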